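(* Let $m\ge 1$ and let $q$ be an $m\times m$ matrix each of whose entries is either $0$ or an indeterminate, where the indeterminates occurring in $q$ are pairwise distinct and algebraically independent over a field $F$ ($F=\mathbb{R}$ or $\mathbb{C}$). Suppose that $\det q$, viewed as a polynomial in $F[\text{indeterminates}]$, is irreducible. Then every first minor of $q$ (the determinant of any $(m-1)\times(m-1)$ submatrix obtained by deleting one row and one column; for $m=1$ this is the empty determinant $1$) is a nonzero polynomial. Consequently, for almost all values of the hopping terms, every first minor of $q$ is nonzero.
   Context: In the physical interpretation, $q$ is the off-diagonal block of a chiral tight-binding Hamiltonian $H=\begin{pmatrix}0&q\\ q^\dagger&0\end{pmatrix}$ on a bipartite graph with equal numbers of "black" and "white" sites: rows of $q$ are indexed by one sublattice, columns by the other, and the entry for a pair of sites is an indeterminate (a "hopping term") if the sites are joined by an edge and $0$ otherwise. Deleting a row and a column corresponds to deleting one white and one black site. "For almost all values of the hopping terms" means: for all assignments of values in $F$ to the indeterminates outside the zero set of some nonzero polynomial. *)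

theory Defs
  imports "HOL-Library.Poly_Mapping" "HOL-Library.Product_Lexorder"
    "HOL-Computational_Algebra.Factorial_Ring" "Jordan_Normal_Form.Determinant"
begin

text \<open>Multivariate polynomials over a coefficient ring 'a in indeterminates indexed by
  pairs of naturals (x_(i,j) is the hopping term for row i, column j), represented
  as finitely supported maps from monomials (exponent vectors) to coefficients.\<close>
type_synonym 'a hpoly = "((nat \<times> nat) \<Rightarrow>\<^sub>0 nat) \<Rightarrow>\<^sub>0 'a"

definition hvar :: "nat \<times> nat \<Rightarrow> 'a::comm_semiring_1 hpoly" where
  "hvar v = Poly_Mapping.single (Poly_Mapping.single v 1) 1"

definition pattern_mat :: "nat \<Rightarrow> (nat \<times> nat) set \<Rightarrow> 'a::comm_ring_1 hpoly mat" where
  "pattern_mat m E = mat m m (\<lambda>(i,j). if (i,j) \<in> E then hvar (i,j) else 0)"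

definition heval :: "'a::comm_semiring_1 hpoly \<Rightarrow> (nat \<times> nat \<Rightarrow> 'a) \<Rightarrow> 'a" where
  "heval p x = (\<Sum>mon\<in>Poly_Mapping.keys p.
      Poly_Mapping.lookup p mon * (\<Prod>v\<in>Poly_Mapping.keys mon. x v ^ Poly_Mapping.lookup mon v))"

end

theory Submission
  imports Defs
begin


lemma hall:
  fixes N :: "'x \<Rightarrow> 'y set"
  assumes "finite X" "\<forall>x\<in>X. finite (N x)" "\<forall>T\<subseteq>X. card T \<le> card (\<Union>(N ` T))"
  shows "\<exists>g. inj_on g X \<and> (\<forall>x\<in>X. g x \<in> N x)"
  using assms
proof (induction "card X" arbitrary: X N rule: less_induct)
  case less
  note fin = less.prems(1) and finN = less.prems(2) and H = less.prems(3)
  show ?case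
  proof (cases "X = {}")
    case True then show ?thesis by auto
  next
    case Xne: False
    show ?thesis
    proof (cases "\<exists>T. T \<subseteq> X \<and> T \<noteq> {} \<and> T \<noteq> X \<and> card (\<Union>(N ` T)) \<le> card T")
      case True
      then obtain T where T: "T \<subseteq> X" "T \<noteq> {}" "T \<noteq> X" "card (\<Union>(N ` T)) \<le> card T" by blast
      have finT: "finite T" using T fin finite_subset by blast
      have cT: "card T < card X" using T fin by (meson psubsetI psubset_card_mono)
      have "\<exists>g. inj_on g T \<and> (\<forall>x\<in>T. g x \<in> N x)"
        by (rule less.hyps[OF cT finT]) (use finN H T(1) in auto)
      then obtain g1 where g1: "inj_on g1 T" "\<forall>x\<in>T. g1 x \<in> N x" by blast
      define NT where "NT = \<Union>(N ` T)"
      have finNT: "finite NT" unfolding NT_def using finT finN T(1) by auto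
      have cNT: "card NT = card T" using H T unfolding NT_def by (simp add: le_antisym)
      define N2 where "N2 = (\<lambda>x. N x - NT)"
      have "card (X - T) = card X - card T" using T(1) finT by (simp add: card_Diff_subset)
      moreover have "0 < card T" using T(2) finT by (simp add: card_gt_0_iff)
      ultimately have cXT: "card (X - T) < card X" using cT by linarith
      have H2: "\<forall>U\<subseteq>X - T. card U \<le> card (\<Union>(N2 ` U))"
      proof (intro allI impI)
        fix U assume U: "U \<subseteq> X - T"
        have finU: "finite U" using U fin finite_subset by blast
        have eq: "\<Union>(N ` (U \<union> T)) = \<Union>(N2 ` U) \<union> NT" unfolding N2_def NT_def by auto
        have finUN: "finite (\<Union>(N2 ` U))" unfolding N2_def using finU finN U by auto
        have c1: "card (U \<union> T) = card U + card T" using U finU finT by (subst card_Un_disjoint) auto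
        have c2: "card (U \<union> T) \<le> card (\<Union>(N ` (U \<union> T)))" using H U T(1) by (meson Un_least Diff_subset order_trans)
        have c3: "card (\<Union>(N ` (U \<union> T))) = card (\<Union>(N2 ` U)) + card NT" unfolding eq
          by (rule card_Un_disjoint) (use finUN finNT in \<open>auto simp: N2_def\<close>)
        have "card U + card T \<le> card (\<Union>(N2 ` U)) + card NT" using c1 c2 c3 by simp
        then show "card U \<le> card (\<Union>(N2 ` U))" using cNT by simp
      qed
      obtain g2 where g2: "inj_on g2 (X - T)" "\<forall>x\<in>X - T. g2 x \<in> N2 x"
        using less.hyps[OF cXT _ _ H2] fin finN unfolding N2_def by auto
      define g where "g = (\<lambda>x. if x \<in> T then g1 x else g2 x)"
      have "inj_on g X"
      proof (rule inj_onI)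
        fix a b assume ab: "a \<in> X" "b \<in> X" "g a = g b"
        show "a = b"
        proof (cases "a \<in> T"; cases "b \<in> T")
          assume "a \<in> T" "b \<in> T" then show ?thesis using ab g1 unfolding g_def by (auto dest: inj_onD)
        next
          assume "a \<notin> T" "b \<notin> T" then show ?thesis using ab g2 unfolding g_def by (auto dest: inj_onD)
        next
          assume "a \<in> T" "b \<notin> T"
          then have "g a \<in> NT" "g b \<notin> NT" using ab g1 g2 unfolding g_def NT_def N2_def by auto
          then show ?thesis using ab by auto
        next
          assume a: "a \<notin> T" and b: "b \<in> T"
          have "g b \<in> NT" using b g1 unfolding g_def NT_def by auto
          moreover have "g a \<notin> NT" using a ab(1) g2 unfolding g_def N2_def by auto
          ultimately show ?thesis using ab by auto
        qed
      qed
      moreover have "\<forall>x\<in>X. g x \<in> N x" using g1 g2 unfolding g_def N2_def by auto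
      ultimately show ?thesis by blast
    next
      case False
      hence strict: "\<And>T. T \<subseteq> X \<Longrightarrow> T \<noteq> {} \<Longrightarrow> T \<noteq> X \<Longrightarrow> card T < card (\<Union>(N ` T))"
        by (meson not_le)
      obtain x where x: "x \<in> X" using Xne by blast
      have "card {x} \<le> card (N x)" using H[rule_format, of "{x}"] x by simp
      hence "N x \<noteq> {}" by auto
      then obtain y where y: "y \<in> N x" by blast
      define N2 where "N2 = (\<lambda>z. N z - {y})"
      have cX: "card (X - {x}) < card X" proof -
        have "card X > 0" using x fin card_gt_0_iff by blast
        then show ?thesis using x fin by simp
      qed
      have H2: "\<forall>U\<subseteq>X - {x}. card U \<le> card (\<Union>(N2 ` U))"
      proof (intro allI impI)
        fix U assume U: "U \<subseteq> X - {x}"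
        show "card U \<le> card (\<Union>(N2 ` U))"
        proof (cases "U = {}")
          case True then show ?thesis by simp
        next
          case False
          have finU: "finite U" using U fin finite_subset by blast
          have lt: "card U < card (\<Union>(N ` U))" using strict[of U] U x False by auto
          have eq: "\<Union>(N2 ` U) = \<Union>(N ` U) - {y}" unfolding N2_def by auto
          have "card (\<Union>(N ` U)) - 1 \<le> card (\<Union>(N ` U) - {y})" by (simp add: card_Diff_singleton_if)
          then show ?thesis using lt unfolding eq by linarith
        qed
      qed
      obtain g2 where g2: "inj_on g2 (X - {x})" "\<forall>z\<in>X - {x}. g2 z \<in> N2 z"
        using less.hyps[OF cX _ _ H2] fin finN unfolding N2_def by auto
      define g where "g = g2(x := y)"
      have "inj_on g X"
      proof (rule inj_onI)
        fix a b assume ab: "a \<in> X" "b \<in> X" "g a = g b"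
        show "a = b"
          using ab g2 unfolding g_def N2_def
          by (cases "a = x"; cases "b = x") (auto dest: inj_onD)
      qed
      moreover have "\<forall>z\<in>X. g z \<in> N z" using g2 y unfolding g_def N2_def by auto
      ultimately show ?thesis by blast
    qed
  qed
qed



definition monval :: "((nat \<times> nat) \<Rightarrow>\<^sub>0 nat) \<Rightarrow> (nat \<times> nat \<Rightarrow> 'a) \<Rightarrow> 'a::comm_semiring_1" where
  "monval mn x = (\<Prod>v\<in>Poly_Mapping.keys mn. x v ^ Poly_Mapping.lookup mn v)"

lemma heval_monval: "heval p x = (\<Sum>mn\<in>Poly_Mapping.keys p. Poly_Mapping.lookup p mn * monval mn x)"
  unfolding heval_def monval_def ..

lemma monval_superset:
  assumes "finite K" "Poly_Mapping.keys a \<subseteq> K"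
  shows "monval a x = (\<Prod>v\<in>K. x v ^ Poly_Mapping.lookup a v)"
  unfolding monval_def
  by (rule prod.mono_neutral_left) (use assms in \<open>auto simp: in_keys_iff\<close>)

lemma monval_add: "monval (a + b) x = monval a x * monval b x"
proof -
  let ?K = "Poly_Mapping.keys a \<union> Poly_Mapping.keys b"
  have "monval (a + b) x = (\<Prod>v\<in>?K. x v ^ Poly_Mapping.lookup (a+b) v)"
    by (rule monval_superset) (auto dest: subsetD[OF keys_add])
  also have "\<dots> = (\<Prod>v\<in>?K. x v ^ Poly_Mapping.lookup a v) * (\<Prod>v\<in>?K. x v ^ Poly_Mapping.lookup b v)"
    by (simp add: lookup_add power_add prod.distrib)
  also have "\<dots> = monval a x * monval b x"
    by (simp add: monval_superset[of ?K a] monval_superset[of ?K b])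
  finally show ?thesis .
qed

lemma monval_zero[simp]: "monval 0 x = 1"
  unfolding monval_def by simp

lemma heval_zero[simp]: "heval 0 x = 0"
  unfolding heval_def by simp

lemma heval_add: "heval (p + q) x = heval p x + heval q x"
  unfolding heval_monval
  by (rule setsum_keys_plus_distrib) (auto simp: distrib_right)

lemma heval_sum: "heval (sum f A) x = (\<Sum>a\<in>A. heval (f a) x)"
  by (induction A rule: infinite_finite_induct) (auto simp: heval_add)

lemma heval_single: "heval (Poly_Mapping.single k v) x = v * monval k x"
  unfolding heval_monval by auto

lemma pm_expansion: "p = (\<Sum>a\<in>Poly_Mapping.keys p. Poly_Mapping.single a (Poly_Mapping.lookup p a))"
proof (rule poly_mapping_eqI)
  fix k
  show "Poly_Mapping.lookup p k = Poly_Mapping.lookup (\<Sum>a\<in>Poly_Mapping.keys p. Poly_Mapping.single a (Poly_Mapping.lookup p a)) k"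
    unfolding lookup_sum lookup_single
    by (cases "k \<in> Poly_Mapping.keys p") (auto simp: when_def in_keys_iff)
qed

lemma heval_mult_single: "heval (Poly_Mapping.single a c * q) x = heval (Poly_Mapping.single a c) x * heval q x"
proof -
  have "Poly_Mapping.single a c * q = (\<Sum>b\<in>Poly_Mapping.keys q. Poly_Mapping.single a c * Poly_Mapping.single b (Poly_Mapping.lookup q b))"
    by (subst pm_expansion[of q]) (simp add: sum_distrib_left)
  then have "heval (Poly_Mapping.single a c * q) x = (\<Sum>b\<in>Poly_Mapping.keys q. heval (Poly_Mapping.single a c) x * heval (Poly_Mapping.single b (Poly_Mapping.lookup q b)) x)"
    by (simp add: heval_sum mult_single heval_single monval_add mult_ac)
  also have "\<dots> = heval (Poly_Mapping.single a c) x * heval q x"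
    by (subst (2) pm_expansion[of q]) (simp add: heval_sum sum_distrib_left)
  finally show ?thesis .
qed

lemma heval_mult: "heval (p * q) x = heval p x * heval q x"
proof -
  have "heval (p * q) x = heval ((\<Sum>a\<in>Poly_Mapping.keys p. Poly_Mapping.single a (Poly_Mapping.lookup p a)) * q) x"
    by (subst pm_expansion[of p]) simp
  also have "\<dots> = (\<Sum>a\<in>Poly_Mapping.keys p. heval (Poly_Mapping.single a (Poly_Mapping.lookup p a)) x * heval q x)"
    by (simp add: sum_distrib_right heval_sum heval_mult_single)
  also have "\<dots> = heval p x * heval q x"
    by (subst (3) pm_expansion[of p]) (simp add: heval_sum sum_distrib_right)
  finally show ?thesis .
qed

lemma heval_one[simp]: "heval 1 x = 1"
  by (simp add: heval_def)

lemma heval_hvar[simp]: "heval (hvar v) x = x v"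
  unfolding hvar_def heval_single monval_def by simp

lemma heval_hom: "comm_ring_hom (\<lambda>p. heval p x)"
  by unfold_locales (auto simp: heval_add heval_mult)



lemma heval_det: "heval (det M) x = det (map_mat (\<lambda>p. heval p x) M)"
  using comm_ring_hom.hom_det[OF heval_hom, of x M] by simp

lemma unit_heval: "p dvd 1 \<Longrightarrow> heval p x \<noteq> (0::'a::comm_ring_1)"
proof
  assume "p dvd 1" "heval p x = 0"
  then obtain k where "1 = p * k" by (auto elim: dvdE)
  then have "heval (p * k) x = 1" by (metis heval_one)
  then have "heval p x * heval k x = 1" by (simp add: heval_mult)
  then show False using \<open>heval p x = 0\<close> by simp
qed

lemma perm_mat_det:
  assumes "\<forall>k<m. \<sigma> k < m" "inj_on \<sigma> {..<m}"
  shows "det (mat m m (\<lambda>(k,l). if l = \<sigma> k then 1 else 0) :: 'a::field mat) \<noteq> 0"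
proof -
  let ?Q = "mat m m (\<lambda>(k,l). if l = \<sigma> k then 1 else 0) :: 'a mat"
  have "?Q * transpose_mat ?Q = 1\<^sub>m m"
  proof (rule eq_matI)
    fix k k' assume kk: "k < dim_row (1\<^sub>m m :: 'a mat)" "k' < dim_col (1\<^sub>m m :: 'a mat)"
    then have k: "k < m" "k' < m" by auto
    have "(?Q * transpose_mat ?Q) $$ (k,k') = (\<Sum>l\<in>{0..<m}. (if l = \<sigma> k then 1 else 0) * (if l = \<sigma> k' then 1 else 0))"
      using k by (simp add: scalar_prod_def)
    also have "\<dots> = (\<Sum>l\<in>{0..<m}. if l = \<sigma> k then (if \<sigma> k = \<sigma> k' then 1 else 0) else 0)"
      by (rule sum.cong) auto
    also have "\<dots> = (if \<sigma> k = \<sigma> k' then 1 else 0)" using assms k by simp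
    also have "\<dots> = (if k = k' then 1 else 0)" using assms(2) k by (auto dest: inj_onD)
    finally show "(?Q * transpose_mat ?Q) $$ (k,k') = 1\<^sub>m m $$ (k,k')" using k by simp
  qed auto
  then have "det ?Q * det (transpose_mat ?Q) = 1"
    by (metis det_mult det_one mat_carrier transpose_carrier_mat)
  then show ?thesis by auto
qed

lemma det_row_zero_lap:
  assumes "M \<in> carrier_mat m m" "k < m" "\<forall>l<m. M $$ (k,l) = 0"
  shows "det (M :: 'b::comm_ring_1 mat) = 0"
  using laplace_expansion_row[OF assms(1,2)] assms(3) by simp

lemma factor_not_irred:
  fixes M :: "'a::field hpoly mat"
  assumes M: "M \<in> carrier_mat m m"
    and RS: "R \<subseteq> {..<m}" "S \<subseteq> {..<m}" "R \<noteq> {}" "S \<noteq> {}" "card R + card S = m"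
    and zero: "\<forall>k\<in>R. \<forall>l\<in>S. M $$ (k,l) = 0"
    and ev0: "\<forall>k<m. \<forall>l<m. heval (M $$ (k,l)) (\<lambda>_. 0) = 0"
  shows "\<not> irreducible (det M)"
proof
  assume irr: "irreducible (det M)"
  let ?X = "{..<m}"
  have "card (?X - R) = card S" using RS by (simp add: card_Diff_subset finite_subset)
  then obtain \<tau> where \<tau>: "bij_betw \<tau> (?X - R) S"
    using RS by (metis finite_Diff finite_lessThan finite_same_card_bij finite_subset)
  define \<tau>i where "\<tau>i = inv_into (?X - R) \<tau>"
  define A :: "'a hpoly mat" where "A = mat m m (\<lambda>(k,l). if k \<in> R then M $$ (k,l) else if l = \<tau> k then 1 else 0)"
  define B :: "'a hpoly mat" where "B = mat m m (\<lambda>(p,l). if p \<notin> S then (if p = l then 1 else 0) else M $$ (\<tau>i p, l))"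
  have \<tau>S: "\<And>k. k < m \<Longrightarrow> k \<notin> R \<Longrightarrow> \<tau> k \<in> S" using \<tau> by (auto simp: bij_betw_def)
  have \<tau>iX: "\<And>p. p \<in> S \<Longrightarrow> \<tau>i p < m"
    using \<tau> unfolding \<tau>i_def by (metis Diff_iff bij_betw_def inv_into_into lessThan_iff)
  have \<tau>inv: "\<And>k. k < m \<Longrightarrow> k \<notin> R \<Longrightarrow> \<tau>i (\<tau> k) = k"
    using \<tau> unfolding \<tau>i_def by (simp add: bij_betw_def inv_into_f_f)
  have MAB: "M = A * B"
  proof (rule eq_matI)
    fix k l assume "k < dim_row (A * B)" "l < dim_col (A * B)"
    then have kl: "k < m" "l < m" by (auto simp: A_def B_def)
    have AB: "(A * B) $$ (k,l) = (\<Sum>p\<in>{0..<m}. A $$ (k,p) * B $$ (p,l))"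
      using kl by (simp add: A_def B_def scalar_prod_def)
    show "M $$ (k,l) = (A * B) $$ (k,l)"
    proof (cases "k \<in> R")
      case True
      have "(\<Sum>p\<in>{0..<m}. A $$ (k,p) * B $$ (p,l)) = (\<Sum>p\<in>{0..<m}. if p = l then M $$ (k,l) else 0)"
      proof (rule sum.cong[OF refl])
        fix p assume p: "p \<in> {0..<m}"
        show "A $$ (k,p) * B $$ (p,l) = (if p = l then M $$ (k,l) else 0)"
        proof (cases "p \<in> S")
          case True then show ?thesis using zero \<open>k \<in> R\<close> p kl by (auto simp: A_def B_def)
        next
          case False then show ?thesis using \<open>k \<in> R\<close> p kl by (auto simp: A_def B_def)
        qed
      qed
      also have "\<dots> = M $$ (k,l)" using kl by simp
      finally show ?thesis using AB by simp
    next
      case False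
      have tk: "\<tau> k \<in> S" "\<tau> k < m" using \<tau>S[OF kl(1) False] RS by auto
      have "(\<Sum>p\<in>{0..<m}. A $$ (k,p) * B $$ (p,l)) = (\<Sum>p\<in>{0..<m}. if p = \<tau> k then B $$ (\<tau> k,l) else 0)"
        by (rule sum.cong[OF refl]) (use False kl in \<open>auto simp: A_def\<close>)
      also have "\<dots> = B $$ (\<tau> k, l)" using tk by simp
      also have "\<dots> = M $$ (k,l)" using tk kl \<tau>inv[OF kl(1) False] by (simp add: B_def)
      finally show ?thesis using AB by simp
    qed
  qed (use M in \<open>auto simp: A_def B_def\<close>)
  have A: "A \<in> carrier_mat m m" and B: "B \<in> carrier_mat m m" by (auto simp: A_def B_def)
  have "det M = det A * det B" using MAB det_mult[OF A B] by simp
  then have "det A dvd 1 \<or> det B dvd 1" using irr irreducibleD by blast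
  moreover have "heval (det A) (\<lambda>_. 0) = 0"
  proof -
    obtain k where k: "k \<in> R" using RS by auto
    then have "k < m" using RS by auto
    show ?thesis unfolding heval_det
      by (rule det_row_zero_lap[of _ m k]) (use k \<open>k < m\<close> ev0 in \<open>auto simp: A_def\<close>)
  qed
  moreover have "heval (det B) (\<lambda>_. 0) = 0"
  proof -
    obtain p where p: "p \<in> S" using RS by auto
    then have "p < m" using RS by auto
    show ?thesis unfolding heval_det
      by (rule det_row_zero_lap[of _ m p]) (use p \<open>p < m\<close> ev0 \<tau>iX in \<open>auto simp: B_def\<close>)
  qed
  ultimately show False using unit_heval by metis
qed



lemma pattern_carrier: "pattern_mat m E \<in> carrier_mat m m"
  by (simp add: pattern_mat_def)

lemma pattern_index: "k < m \<Longrightarrow> l < m \<Longrightarrow> pattern_mat m E $$ (k,l) = (if (k,l) \<in> E then hvar (k,l) else 0)"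
  by (simp add: pattern_mat_def)

lemma minor_nonzero:
  fixes E :: "(nat \<times> nat) set"
  assumes irr: "irreducible (det (pattern_mat m E :: 'a::field hpoly mat))"
    and ij: "i < m" "j < m"
  shows "det (mat_delete (pattern_mat m E :: 'a hpoly mat) i j) \<noteq> 0"
proof
  assume del0: "det (mat_delete (pattern_mat m E :: 'a hpoly mat) i j) = 0"
  define P :: "'a hpoly mat" where "P = pattern_mat m E"
  define X where "X = {..<m} - {i}"
  define Y where "Y = {..<m} - {j}"
  define N where "N = (\<lambda>k. {l\<in>Y. (k,l) \<in> E})"
  have finX: "finite X" and finN: "\<forall>k\<in>X. finite (N k)" by (auto simp: X_def N_def Y_def)
  have ev0: "\<forall>k<m. \<forall>l<m. heval (P $$ (k,l)) (\<lambda>_. 0) = 0"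
    by (auto simp: P_def pattern_index)
  show False
  proof (cases "\<forall>T\<subseteq>X. card T \<le> card (\<Union>(N ` T))")
    case True
    obtain g where g: "inj_on g X" "\<forall>k\<in>X. g k \<in> N k" using hall[OF finX finN True] by blast
    define \<sigma> where "\<sigma> = g(i := j)"
    have \<sigma>m: "\<forall>k<m. \<sigma> k < m" using g ij by (auto simp: \<sigma>_def X_def N_def Y_def)
    have \<sigma>E: "\<And>k. k < m \<Longrightarrow> k \<noteq> i \<Longrightarrow> (k, \<sigma> k) \<in> E" using g by (auto simp: \<sigma>_def X_def N_def)
    have \<sigma>inj: "inj_on \<sigma> {..<m}"
    proof (rule inj_onI)
      fix a b assume ab: "a \<in> {..<m}" "b \<in> {..<m}" "\<sigma> a = \<sigma> b"
      have gY: "\<And>k. k \<in> X \<Longrightarrow> g k \<noteq> j" using g by (auto simp: N_def Y_def)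
      show "a = b"
        using ab g(1) gY unfolding \<sigma>_def X_def
        by (cases "a = i"; cases "b = i") (auto dest: inj_onD)
    qed
    define P' :: "'a hpoly mat" where
      "P' = mat m m (\<lambda>(k,l). if k = i then (if l = j then hvar (i,j) else 0) else P $$ (k,l))"
    have P'c: "P' \<in> carrier_mat m m" by (simp add: P'_def)
    have del: "mat_delete P' i j = mat_delete P i j"
      unfolding mat_delete_def P'_def using ij by (intro eq_matI) (auto simp: P_def pattern_mat_def)
    have "det P' = (\<Sum>l<m. P' $$ (i,l) * cofactor P' i l)"
      by (rule laplace_expansion_row[OF P'c ij(1)])
    also have "\<dots> = (\<Sum>l<m. if l = j then hvar (i,j) * cofactor P' i j else 0)"
      by (rule sum.cong) (auto simp: P'_def ij)
    also have "\<dots> = hvar (i,j) * cofactor P' i j" using ij by simp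
    also have "cofactor P' i j = 0" unfolding cofactor_def del using del0 by (simp add: P_def)
    finally have detP': "det P' = 0" by simp
    define x :: "nat \<times> nat \<Rightarrow> 'a" where "x = (\<lambda>(k,l). if l = \<sigma> k then 1 else 0)"
    have "map_mat (\<lambda>p. heval p x) P' = mat m m (\<lambda>(k,l). if l = \<sigma> k then 1 else 0)"
    proof (rule eq_matI)
      fix k l assume "k < dim_row (mat m m (\<lambda>(k,l). if l = \<sigma> k then 1 else (0::'a)))"
        "l < dim_col (mat m m (\<lambda>(k,l). if l = \<sigma> k then 1 else (0::'a)))"
      then have kl: "k < m" "l < m" by auto
      show "map_mat (\<lambda>p. heval p x) P' $$ (k,l) = mat m m (\<lambda>(k,l). if l = \<sigma> k then 1 else (0::'a)) $$ (k,l)"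
      proof (cases "k = i")
        case True then show ?thesis using kl by (auto simp: P'_def x_def \<sigma>_def)
      next
        case False
        then show ?thesis using kl \<sigma>E[OF kl(1) False]
          by (auto simp: P'_def x_def P_def pattern_index)
      qed
    qed (auto simp: P'_def)
    then have "det (mat m m (\<lambda>(k,l). if l = \<sigma> k then 1 else 0) :: 'a mat) = 0"
      using detP' heval_det[of P' x] by simp
    then show False using perm_mat_det[OF \<sigma>m \<sigma>inj, where 'a='a] by blast
  next
    case False
    then obtain T where T: "T \<subseteq> X" "card (\<Union>(N ` T)) < card T" by (auto simp: not_le)
    define S0 where "S0 = Y - \<Union>(N ` T)"
    have NY: "\<Union>(N ` T) \<subseteq> Y" by (auto simp: N_def)
    have cY: "card Y = m - 1" using ij by (simp add: Y_def)
    have cX: "card X = m - 1" using ij by (simp add: X_def)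
    have cS0: "card S0 = card Y - card (\<Union>(N ` T))"
      unfolding S0_def by (rule card_Diff_subset) (use NY in \<open>auto simp: Y_def intro: finite_subset\<close>)
    have cT: "card T \<le> m - 1" using T(1) cX finX by (metis card_mono)
    have "m - card T \<le> card S0" using cS0 cY T(2) cT ij by linarith
    then obtain S where S: "S \<subseteq> S0" "card S = m - card T"
      by (meson obtain_subset_with_card_n)
    have "\<not> irreducible (det P)"
    proof (rule factor_not_irred)
      show "P \<in> carrier_mat m m" by (simp add: P_def pattern_carrier)
      show "T \<subseteq> {..<m}" using T(1) by (auto simp: X_def)
      show "S \<subseteq> {..<m}" using S(1) by (auto simp: S0_def Y_def)
      show "T \<noteq> {}" using T(2) by auto
      show "S \<noteq> {}" using S(2) cT ij by auto
      show "card T + card S = m" using S(2) cT ij by linarith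
      show "\<forall>k\<in>T. \<forall>l\<in>S. P $$ (k,l) = 0"
      proof (intro ballI)
        fix k l assume k: "k \<in> T" and l: "l \<in> S"
        then have "k < m" "l < m" "(k,l) \<notin> E" using S(1) T(1) by (auto simp: S0_def X_def N_def Y_def)
        then show "P $$ (k,l) = 0" by (simp add: P_def pattern_index)
      qed
      show "\<forall>k<m. \<forall>l<m. heval (P $$ (k,l)) (\<lambda>_. 0) = 0" by (rule ev0)
    qed
    then show False using irr by (simp add: P_def)
  qed
qed

lemma heval_prod: "heval (prod f A) x = (\<Prod>a\<in>A. heval (f a) x)"
  by (induction A rule: infinite_finite_induct) (auto simp: heval_mult)

theorem mainTheorem1:
  fixes m :: nat and E :: "(nat \<times> nat) set"
  assumes "m \<ge> 1"
    and "E \<subseteq> {..<m} \<times> {..<m}"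
    and "irreducible (det (pattern_mat m E :: 'a::{field, real_normed_field} hpoly mat))"
  shows "(\<forall>i<m. \<forall>j<m. det (mat_delete (pattern_mat m E :: 'a hpoly mat) i j) \<noteq> 0)
    \<and> (\<exists>P :: 'a hpoly. P \<noteq> 0 \<and>
         (\<forall>x. heval P x \<noteq> 0 \<longrightarrow>
            (\<forall>i<m. \<forall>j<m. heval (det (mat_delete (pattern_mat m E :: 'a hpoly mat) i j)) x \<noteq> 0)))"
proof -
  have nz: "\<forall>i<m. \<forall>j<m. det (mat_delete (pattern_mat m E :: 'a hpoly mat) i j) \<noteq> 0"
    using minor_nonzero[OF assms(3)] by blast
  define Q :: "'a hpoly" where
    "Q = (\<Prod>ij\<in>{..<m} \<times> {..<m}. det (mat_delete (pattern_mat m E :: 'a hpoly mat) (fst ij) (snd ij)))"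
  have "Q \<noteq> 0" unfolding Q_def using nz by (auto simp: prod_zero_iff)
  moreover have "\<forall>x. heval Q x \<noteq> 0 \<longrightarrow>
            (\<forall>i<m. \<forall>j<m. heval (det (mat_delete (pattern_mat m E :: 'a hpoly mat) i j)) x \<noteq> 0)"
    unfolding Q_def heval_prod by (auto simp: prod_zero_iff)
  ultimately show ?thesis using nz by blast
qed

end
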